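(* Let $E$ be a closed subset of $\mathbb{R}^n$ and let $k \ge 1$ be such that every two points $x, y \in E$ can be connected by a rectifiable path contained in $E$ whose length is at most $k\,|x-y|$. Let $A : \mathbb{R}^n \to \mathbb{R}$ be a fixed linear mapping and let $f : E \to \mathbb{R}$ be locally Lipschitz. Suppose that for every interval $I \subseteq \mathbb{R}$ and every locally Lipschitz map $p : I \to E$, the derivative of $t \mapsto f(p(t))$ equals $A(p'(t))$ for almost every $t \in I$. Then $f$ is the restriction to $E$ of an affine function on $\mathbb{R}^n$.
   Context: $|\cdot|$ denotes the Euclidean norm on $\mathbb{R}^n$. *)

theory Defs
  imports "HOL-Analysis.Analysis"
begin

definition variation_sums :: "(real \<Rightarrow> 'a::real_normed_vector) \<Rightarrow> real set" where
  "variation_sums g = {(\<Sum>i<m. norm (g (t (Suc i)) - g (t i))) | t m.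
      t 0 = 0 \<and> t m = 1 \<and> (\<forall>i<m. t i \<le> t (Suc i))}"

definition rectifiable_path :: "(real \<Rightarrow> 'a::real_normed_vector) \<Rightarrow> bool" where
  "rectifiable_path g \<longleftrightarrow> path g \<and> bdd_above (variation_sums g)"

definition path_length :: "(real \<Rightarrow> 'a::real_normed_vector) \<Rightarrow> real" where
  "path_length g = Sup (variation_sums g)"

definition locally_lipschitz_on :: "'a::metric_space set \<Rightarrow> ('a \<Rightarrow> 'b::metric_space) \<Rightarrow> bool" where
  "locally_lipschitz_on S f \<longleftrightarrow>
     (\<forall>x\<in>S. \<exists>U L. open U \<and> x \<in> U \<and> L-lipschitz_on (U \<inter> S) f)"

end

theory Submission
  imports Defs
begin


lemma cont_limit_bound:
  fixes g :: "real \<Rightarrow> 'a::real_normed_vector"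
  assumes cont: "continuous_on {a..b} g" and ab: "a < b"
    and bd: "\<And>s s'. a < s' \<Longrightarrow> s' \<le> s \<Longrightarrow> s < b \<Longrightarrow> norm (g s - g s') \<le> c"
  shows "norm (g b - g a) \<le> c"
proof -
  have 1: "norm (g b - g s') \<le> c" if "a < s'" "s' < b" for s'
  proof (rule continuous_on_closure_norm_le[of "{s'..<b}" "\<lambda>s. g s - g s'"])
    show "continuous_on (closure {s'..<b}) (\<lambda>s. g s - g s')"
      using that by (auto intro!: continuous_intros continuous_on_subset[OF cont])
    show "\<forall>y\<in>{s'..<b}. norm (g y - g s') \<le> c" using bd that by auto
    show "b \<in> closure {s'..<b}" using that by simp
  qed
  show ?thesis
  proof (rule continuous_on_closure_norm_le[of "{a<..<b}" "\<lambda>s. g b - g s"])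
    show "continuous_on (closure {a<..<b}) (\<lambda>s. g b - g s)"
      using ab by (auto intro!: continuous_intros continuous_on_subset[OF cont])
    show "\<forall>y\<in>{a<..<b}. norm (g b - g y) \<le> c" using 1 by auto
    show "a \<in> closure {a<..<b}" using ab by simp
  qed
qed


lemma lipschitz_reparam:
  fixes g :: "real \<Rightarrow> 'a::real_normed_vector"
  assumes rp: "rectifiable_path g"
  shows "\<exists>(h::real\<Rightarrow>'a) L. L-lipschitz_on {0..1} h \<and> h ` {0..1} \<subseteq> path_image g
     \<and> h 0 = pathstart g \<and> h 1 = pathfinish g"
proof -
  define S where "S t = {(\<Sum>i<m. norm (g (P (Suc i)) - g (P i))) | P m.
      P 0 = 0 \<and> P m = t \<and> (\<forall>i<m. P i \<le> P (Suc i))}" for t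
  define \<phi> where "\<phi> t = Sup (S t)" for t
  have cont: "continuous_on {0..1} g" using rp by (simp add: rectifiable_path_def path_def)
  have S1: "S 1 = variation_sums g" by (simp add: S_def variation_sums_def)
  have bdd1: "bdd_above (S 1)" using rp S1 by (simp add: rectifiable_path_def)
  have ext: "\<sigma> + norm (g t' - g t) \<in> S t'" if "\<sigma> \<in> S t" "t \<le> t'" for \<sigma> t t'
  proof -
    obtain P m where P: "\<sigma> = (\<Sum>i<m. norm (g (P (Suc i)) - g (P i)))" "P 0 = 0" "P m = t"
      "\<forall>i<m. P i \<le> P (Suc i)" using \<open>\<sigma> \<in> S t\<close> unfolding S_def by blast
    define P' where "P' = P(Suc m := t')"
    have eq: "(\<Sum>i<m. norm (g (P' (Suc i)) - g (P' i))) = \<sigma>"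
      unfolding P(1) by (rule sum.cong) (auto simp: P'_def)
    have f1: "\<sigma> + norm (g t' - g t) = (\<Sum>i<Suc m. norm (g (P' (Suc i)) - g (P' i)))"
      using eq P by (simp add: P'_def)
    have f2: "P' 0 = 0" "P' (Suc m) = t'" using P by (auto simp: P'_def)
    have f3: "\<forall>i<Suc m. P' i \<le> P' (Suc i)"
      using P that by (auto simp: P'_def less_Suc_eq)
    show ?thesis unfolding S_def mem_Collect_eq
      by (rule exI[of _ P'], rule exI[of _ "Suc m"]) (use f1 f2 f3 in blast)
  qed
  have S0: "0 \<in> S 0" unfolding S_def by (rule CollectI, rule exI[of _ "\<lambda>_. 0"], rule exI[of _ 0]) simp
  have bdd: "bdd_above (S t)" if "t \<le> 1" for t
  proof -
    have "\<sigma> \<le> \<phi> 1" if "\<sigma> \<in> S t" for \<sigma>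
    proof -
      have "\<sigma> + norm (g 1 - g t) \<le> \<phi> 1" unfolding \<phi>_def
        by (rule cSup_upper[OF ext[OF that \<open>t \<le> 1\<close>] bdd1])
      then show ?thesis by (smt (verit) norm_ge_zero)
    qed
    then show ?thesis by (auto simp: bdd_above_def)
  qed
  have ne: "S t \<noteq> {}" if "0 \<le> t" for t using ext[OF S0 that] by auto
  have a: "\<phi> s + norm (g t - g s) \<le> \<phi> t" if "0 \<le> s" "s \<le> t" "t \<le> 1" for s t
  proof -
    have "\<phi> s \<le> \<phi> t - norm (g t - g s)" unfolding \<phi>_def
    proof (rule cSup_least[OF ne[OF \<open>0 \<le> s\<close>]])
      fix \<sigma> assume "\<sigma> \<in> S s"
      have "\<sigma> + norm (g t - g s) \<le> Sup (S t)"
        by (rule cSup_upper[OF ext[OF \<open>\<sigma> \<in> S s\<close> \<open>s \<le> t\<close>] bdd[OF \<open>t \<le> 1\<close>]])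
      then show "\<sigma> \<le> Sup (S t) - norm (g t - g s)" by simp
    qed
    then show ?thesis by simp
  qed
  have mono: "\<phi> s \<le> \<phi> t" if "0 \<le> s" "s \<le> t" "t \<le> 1" for s t
    using a[OF that] by (smt (verit) norm_ge_zero)
  have phi0: "0 \<le> \<phi> 0" unfolding \<phi>_def by (rule cSup_upper[OF S0 bdd]) simp
  have nonneg: "0 \<le> \<phi> t" if "0 \<le> t" "t \<le> 1" for t using mono[OF order_refl that] phi0 that by linarith
  define L where "L = \<phi> 1"
  have L0: "0 \<le> L" using nonneg by (simp add: L_def)
  define T where "T u = {t\<in>{0..1}. u * L \<le> \<phi> t}" for u
  define \<tau> where "\<tau> u = Inf (T u)" for u
  have T1: "1 \<in> T u" if "u \<le> 1" for u
    using mult_right_mono[OF that L0] by (auto simp: T_def L_def)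
  have bddT: "bdd_below (T u)" for u by (auto simp: T_def bdd_below_def)
  have tau01: "0 \<le> \<tau> u \<and> \<tau> u \<le> 1" if "u \<le> 1" for u
  proof
    show "\<tau> u \<le> 1" unfolding \<tau>_def by (rule cInf_lower[OF T1[OF that] bddT])
    show "0 \<le> \<tau> u" unfolding \<tau>_def using T1[OF that] by (intro cInf_greatest) (auto simp: T_def)
  qed
  have below: "\<phi> s < u * L" if "0 \<le> s" "s < \<tau> u" "u \<le> 1" for s u
  proof (rule ccontr)
    assume "\<not> \<phi> s < u * L"
    then have "s \<in> T u" using that tau01[OF \<open>u \<le> 1\<close>] by (auto simp: T_def)
    then have "\<tau> u \<le> s" unfolding \<tau>_def by (rule cInf_lower[OF _ bddT])
    then show False using that by simp
  qed
  have above: "u * L \<le> \<phi> s" if hh: "\<tau> u < s" "s \<le> 1" "u \<le> 1" for s u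
  proof -
    obtain t where t: "t \<in> T u" "t < s"
    proof -
      have "T u \<noteq> {}" using T1[OF hh(3)] by auto
      then have "\<exists>x\<in>T u. x < s" using cInf_less_iff[of "T u" s] bddT[of u] hh(1) unfolding \<tau>_def by blast
      then show ?thesis using that by blast
    qed
    then show ?thesis using mono[of t s] hh by (auto simp: T_def)
  qed
  define h where "h u = g (\<tau> u)" for u
  have lip: "dist (h u) (h u') \<le> L * dist u u'" if "u \<in> {0..1}" "u' \<in> {0..1}" "u \<le> u'" for u u'
  proof -
    have uL: "u * L \<le> u' * L" using that(3) L0 by (rule mult_right_mono)
    have sub: "T u' \<subseteq> T u" unfolding T_def using uL by auto
    have le: "\<tau> u \<le> \<tau> u'" unfolding \<tau>_def
      by (rule cInf_superset_mono) (use T1 that sub bddT in auto)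
    have "norm (g (\<tau> u') - g (\<tau> u)) \<le> (u' - u) * L"
    proof (cases "\<tau> u = \<tau> u'")
      case True then show ?thesis using that L0 by simp
    next
      case False
      have tu: "0 \<le> \<tau> u" "\<tau> u' \<le> 1" using tau01 that by auto
      show ?thesis
      proof (rule cont_limit_bound)
        show "continuous_on {\<tau> u..\<tau> u'} g"
          by (rule continuous_on_subset[OF cont]) (use tu in auto)
        show "\<tau> u < \<tau> u'" using le False by simp
        fix s s' assume ss: "\<tau> u < s'" "s' \<le> s" "s < \<tau> u'"
        have r: "0 \<le> s'" "s \<le> 1" using ss tu by linarith+
        have "norm (g s - g s') \<le> \<phi> s - \<phi> s'" using a[of s' s] ss r by simp
        also have "\<dots> \<le> (u' - u) * L"
        proof -
          have "u' \<le> 1" "u \<le> 1" using that by auto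
          have "\<phi> s < u' * L" using below[of s u'] ss r \<open>u' \<le> 1\<close> by linarith
          moreover have "u * L \<le> \<phi> s'" using above[of u s'] ss r \<open>u \<le> 1\<close> by linarith
          ultimately show ?thesis by (simp add: left_diff_distrib)
        qed
        finally show "norm (g s - g s') \<le> (u' - u) * L" .
      qed
    qed
    then show ?thesis using that by (simp add: h_def dist_norm norm_minus_commute mult.commute)
  qed
  have "L-lipschitz_on {0..1} h"
  proof (rule lipschitz_onI)
    fix u u' :: real assume "u \<in> {0..1}" "u' \<in> {0..1}"
    then show "dist (h u) (h u') \<le> L * dist u u'"
      using lip[of u u'] lip[of u' u] by (cases "u \<le> u'") (auto simp: dist_commute)
  qed (rule L0)
  moreover have "h ` {0..1} \<subseteq> path_image g"
    using tau01 by (auto simp: h_def path_image_def)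
  moreover have "h 0 = pathstart g"
  proof -
    have "T 0 = {0..1}" using nonneg by (auto simp: T_def)
    then show ?thesis by (simp add: h_def \<tau>_def pathstart_def)
  qed
  moreover have "h 1 = pathfinish g"
  proof (cases "\<tau> 1 = 1")
    case True then show ?thesis by (simp add: h_def pathfinish_def)
  next
    case False
    then have lt: "\<tau> 1 < 1" using tau01[of 1] by simp
    have "norm (g 1 - g (\<tau> 1)) \<le> 0"
    proof (rule cont_limit_bound[OF _ lt])
      show "continuous_on {\<tau> 1..1} g" by (rule continuous_on_subset[OF cont]) (use tau01[of 1] in auto)
      fix s s' assume ss: "\<tau> 1 < s'" "s' \<le> s" "s < 1"
      have r: "0 \<le> s'" using ss tau01[of 1] by simp
      have "norm (g s - g s') \<le> \<phi> s - \<phi> s'" using a[of s' s] ss r by simp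
      also have "\<dots> \<le> 0" using above[of 1 s'] mono[of s 1] ss r by (simp add: L_def)
      finally show "norm (g s - g s') \<le> 0" .
    qed
    then show ?thesis by (simp add: h_def pathfinish_def)
  qed
  ultimately have "L-lipschitz_on {0..1} h \<and> h ` {0..1} \<subseteq> path_image g \<and> h 0 = pathstart g \<and> h 1 = pathfinish g"
    by (intro conjI)
  then show ?thesis by - (rule exI[of _ h], rule exI[of _ L], assumption)
qed
lemma zero_deriv_image_negligible:
  fixes F :: "real \<Rightarrow> real"
  assumes der: "\<And>t. t \<in> Z \<Longrightarrow> (F has_real_derivative 0) (at t within Z)"
  shows "negligible (F ` Z)"
proof -
  let ?G = "\<lambda>x::real^1. vec (F (x $ 1)) :: real^1"
  have d: "(?G has_derivative (\<lambda>_. 0)) (at x within vec ` Z)" if "x \<in> vec ` Z" for x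
  proof -
    have "\<exists>t\<in>Z. x = vec t" using that by (simp only: image_iff)
    then obtain t where t: "t \<in> Z" "x = vec t" by blast
    have dF: "(F has_derivative (\<lambda>x. x * 0)) (at t within Z)"
    proof -
      have e: "(\<lambda>x::real. x * 0) = (*) 0" by (simp add: fun_eq_iff)
      show ?thesis unfolding e using der[OF t(1)] by (simp only: has_field_derivative_def)
    qed
    have e2: "(*\<^sub>R) (0::real) = (\<lambda>_::real^1. 0::real^1)" by (simp add: fun_eq_iff)
    from has_derivative_vector_1[OF dF] have "(?G has_derivative (\<lambda>_. 0)) (at (vec t) within vec ` Z)"
      unfolding e2 .
    then show ?thesis using t by simp
  qed
  have m0: "matrix (\<lambda>_::real^1. 0::real^1) = 0"
    by (simp add: matrix_def vec_eq_iff)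
  have "negligible (?G ` (vec ` Z))"
  proof (rule baby_Sard[where f' = "\<lambda>_ _. 0"])
    show "CARD(1) \<le> CARD(1)" by simp
    show "\<And>x. x \<in> vec ` Z \<Longrightarrow> (?G has_derivative (\<lambda>_. 0)) (at x within vec ` Z)" by (rule d)
    show "\<And>x. x \<in> vec ` Z \<Longrightarrow> rank (matrix (\<lambda>_::real^1. 0::real^1)) < CARD(1)"
      by (simp add: m0)
  qed
  moreover have "?G ` (vec ` Z) = vec ` (F ` Z)" by (simp add: image_image)
  ultimately have n: "negligible (vec ` (F ` Z) :: (real^1) set)" by simp
  have "negligible ((\<lambda>v::real^1. v $ 1) ` (vec ` (F ` Z)))"
  proof (rule negligible_differentiable_image_negligible[OF _ n])
    show "DIM(real^1) \<le> DIM(real)" by simp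
    show "(\<lambda>v::real^1. v $ 1) differentiable_on vec ` F ` Z"
      by (rule bounded_linear_imp_differentiable_on) (rule bounded_linear_vec_nth)
  qed
  moreover have "(\<lambda>v::real^1. v $ 1) ` (vec ` (F ` Z)) = F ` Z" by (simp add: image_image)
  ultimately show ?thesis by simp
qed




theorem mainTheorem3:
  fixes E :: "'n::euclidean_space set" and k :: real
    and A :: "'n \<Rightarrow> real" and f :: "'n \<Rightarrow> real"
  assumes "closed E"
    and "k \<ge> 1"
    and "\<forall>x\<in>E. \<forall>y\<in>E. \<exists>g. rectifiable_path g \<and> path_image g \<subseteq> E \<and>
           pathstart g = x \<and> pathfinish g = y \<and> path_length g \<le> k * dist x y"
    and "linear A"
    and "locally_lipschitz_on E f"
    and "\<forall>(I::real set) p. is_interval I \<and> p ` I \<subseteq> E \<and> locally_lipschitz_on I p \<longrightarrow>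
           (AE t in lborel. t \<in> I \<longrightarrow>
              (\<exists>v. (p has_vector_derivative v) (at t within I) \<and>
                   ((\<lambda>s. f (p s)) has_real_derivative A v) (at t within I)))"
  shows "\<exists>l b. linear l \<and> (\<forall>x\<in>E. f x = l x + b)"
proof -
  have bl: "bounded_linear A" using assms(4) by (simp add: linear_conv_bounded_linear)
  obtain K where K: "\<And>x. norm (A x) \<le> norm x * K" using bounded_linear.bounded[OF bl] by blast
  have key: "f y - A y = f x - A x" if xy: "x \<in> E" "y \<in> E" for x y
  proof -
    obtain g where g: "rectifiable_path g" "path_image g \<subseteq> E" "pathstart g = x" "pathfinish g = y"
      using assms(3) xy by blast
    obtain h :: "real \<Rightarrow> 'n" and L where h: "L-lipschitz_on {0..1} h" "h ` {0..1} \<subseteq> path_image g"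
      "h 0 = x" "h 1 = y"
      using lipschitz_reparam[OF g(1)] g(3,4) by blast
    let ?I = "{0..1::real}"
    have hE: "h ` ?I \<subseteq> E" using h(2) g(2) by blast
    have L0: "0 \<le> L" using h(1) by (simp add: lipschitz_on_def)
    have llh: "locally_lipschitz_on ?I h" unfolding locally_lipschitz_on_def
    proof
      fix t assume "t \<in> ?I"
      show "\<exists>U L. open U \<and> t \<in> U \<and> L-lipschitz_on (U \<inter> ?I) h"
        using h(1) by (intro exI[of _ UNIV] exI[of _ L]) simp
    qed
    have "AE t in lborel. t \<in> ?I \<longrightarrow>
              (\<exists>v. (h has_vector_derivative v) (at t within ?I) \<and>
                   ((\<lambda>s. f (h s)) has_real_derivative A v) (at t within ?I))"
      by (rule assms(6)[rule_format], intro conjI) (use hE llh is_interval_cc in auto)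
    then obtain N where N: "N \<in> null_sets lborel"
      and NN: "{t \<in> space lborel. \<not> (t \<in> ?I \<longrightarrow>
              (\<exists>v. (h has_vector_derivative v) (at t within ?I) \<and>
                   ((\<lambda>s. f (h s)) has_real_derivative A v) (at t within ?I)))} \<subseteq> N"
      by (rule AE_E) (blast intro: null_setsI)
    define F where "F s = f (h s) - A (h s)" for s
    define Z where "Z = ?I - N"
    have dZ: "(F has_real_derivative 0) (at t within Z)" if tZ: "t \<in> Z" for t
    proof -
      obtain v where v: "(h has_vector_derivative v) (at t within ?I)"
        "((\<lambda>s. f (h s)) has_real_derivative A v) (at t within ?I)"
      proof -
        have tI: "t \<in> ?I" "t \<notin> N" using tZ by (auto simp: Z_def)
        have "t \<in> ?I \<longrightarrow> (\<exists>v. (h has_vector_derivative v) (at t within ?I) \<and>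
                   ((\<lambda>s. f (h s)) has_real_derivative A v) (at t within ?I))"
          using NN tI(2) by (auto simp: subset_iff)
        then show ?thesis using tI(1) that by blast
      qed
      have "((\<lambda>s. A (h s)) has_vector_derivative A v) (at t within ?I)"
        by (rule bounded_linear.has_vector_derivative[OF bl v(1)])
      then have "((\<lambda>s. A (h s)) has_real_derivative A v) (at t within ?I)"
        by (simp add: has_real_derivative_iff_has_vector_derivative)
      from DERIV_diff[OF v(2) this] have "(F has_real_derivative 0) (at t within ?I)"
        by (simp add: F_def[abs_def])
      then show ?thesis by (rule has_field_derivative_subset) (auto simp: Z_def)
    qed
    have negZ: "negligible (F ` Z)" by (rule zero_deriv_image_negligible) (rule dZ)
    have lb: "\<exists>T B. open T \<and> t \<in> T \<and> 0 \<le> B \<and> (\<forall>s \<in> ?I \<inter> T. norm (F s - F t) \<le> B * norm (s - t))"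
      if t: "t \<in> ?I" for t
    proof -
      have "h t \<in> E" using hE t by auto
      then obtain U Lf where U: "open U" "h t \<in> U" "Lf-lipschitz_on (U \<inter> E) f"
        using assms(5) unfolding locally_lipschitz_on_def by blast
      have Lf0: "0 \<le> Lf" using U(3) by (simp add: lipschitz_on_def)
      obtain r where r: "r > 0" "ball (h t) r \<subseteq> U" using U(1,2) openE by blast
      have ch: "continuous_on ?I h" using h(1) by (rule lipschitz_on_continuous_on)
      then obtain d where d: "d > 0" "\<forall>s\<in>?I. dist s t < d \<longrightarrow> dist (h s) (h t) < r"
        using t r(1) unfolding continuous_on_iff by blast
      show ?thesis
      proof (intro exI conjI ballI)
        show "open (ball t d)" by simp
        show "t \<in> ball t d" using d by simp
        show "0 \<le> (Lf + \<bar>K\<bar>) * L" using Lf0 L0 by simp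
        fix s assume s: "s \<in> ?I \<inter> ball t d"
        then have "h s \<in> U" using d r by (auto simp: dist_commute)
        have hs: "h s \<in> E" using hE s by auto
        have hst: "dist (h s) (h t) \<le> L * dist s t" using h(1) s t by (auto simp: lipschitz_on_def)
        have 1: "dist (f (h s)) (f (h t)) \<le> Lf * dist (h s) (h t)"
          using U(3) \<open>h s \<in> U\<close> hs U(2) \<open>h t \<in> E\<close> by (auto simp: lipschitz_on_def)
        have 2: "norm (A (h s) - A (h t)) \<le> norm (h s - h t) * \<bar>K\<bar>"
          using K[of "h s - h t"] linear_diff[OF assms(4)]
          by (metis abs_ge_self mult_left_mono norm_ge_zero order_trans)
        have "norm (F s - F t) \<le> dist (f (h s)) (f (h t)) + norm (A (h s) - A (h t))"
          by (simp add: F_def dist_real_def)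
        also have "\<dots> \<le> Lf * dist (h s) (h t) + dist (h s) (h t) * \<bar>K\<bar>"
          using 1 2 by (simp add: dist_norm)
        also have "\<dots> = (Lf + \<bar>K\<bar>) * dist (h s) (h t)" by (simp add: algebra_simps)
        also have "\<dots> \<le> (Lf + \<bar>K\<bar>) * (L * dist s t)"
          using hst Lf0 by (intro mult_left_mono) auto
        finally show "norm (F s - F t) \<le> (Lf + \<bar>K\<bar>) * L * norm (s - t)"
          by (simp add: dist_norm mult.assoc)
      qed
    qed
    have negN: "negligible (F ` (?I \<inter> N))"
    proof (rule negligible_locally_Lipschitz_image)
      show "DIM(real) \<le> DIM(real)" by simp
      show "negligible (?I \<inter> N)"
        using N by (metis negligible_iff_null_sets null_sets_completionI negligible_subset Int_lower2)
      fix t assume "t \<in> ?I \<inter> N"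
      then obtain T B where "open T" "t \<in> T" "\<forall>s \<in> ?I \<inter> T. norm (F s - F t) \<le> B * norm (s - t)"
        using lb by blast
      then show "\<exists>T B. open T \<and> t \<in> T \<and> (\<forall>y\<in>?I \<inter> N \<inter> T. norm (F y - F t) \<le> B * norm (y - t))"
        by blast
    qed
    have contF: "continuous_on ?I F"
      unfolding continuous_on_eq_continuous_within
    proof
      fix t assume t: "t \<in> ?I"
      obtain T B where T: "open T" "t \<in> T" "0 \<le> B" "\<forall>s \<in> ?I \<inter> T. norm (F s - F t) \<le> B * norm (s - t)"
        using lb[OF t] by blast
      obtain r where r: "r > 0" "ball t r \<subseteq> T" using T(1,2) openE by blast
      show "continuous (at t within ?I) F"
        unfolding continuous_within_eps_delta
      proof (intro allI impI)
        fix e :: real assume e: "e > 0"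
        show "\<exists>d>0. \<forall>x'\<in>?I. dist x' t < d \<longrightarrow> dist (F x') (F t) < e"
        proof (intro exI conjI ballI impI)
          show "0 < min r (e / (B + 1))" using r e T(3) by simp
          fix s assume s: "s \<in> ?I" "dist s t < min r (e / (B + 1))"
          then have "s \<in> T" using r by (auto simp: dist_commute)
          then have "norm (F s - F t) \<le> B * norm (s - t)" using T(4) s by blast
          also have "\<dots> \<le> (B + 1) * norm (s - t)" by (simp add: algebra_simps)
          also have "\<dots> < (B + 1) * (e / (B + 1))"
            using s T(3) by (intro mult_strict_left_mono) (auto simp: dist_norm)
          also have "\<dots> = e" using T(3) by simp
          finally show "dist (F s) (F t) < e" by (simp add: dist_norm)
        qed
      qed
    qed
    have sub: "F ` ?I \<subseteq> F ` Z \<union> F ` (?I \<inter> N)" by (auto simp: Z_def)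
    have negI: "negligible (F ` ?I)"
      by (rule negligible_subset[OF _ sub]) (use negZ negN in simp)
    have "F 1 = F 0"
    proof (rule ccontr)
      assume ne: "F 1 \<noteq> F 0"
      define a where "a = min (F 0) (F 1)"
      define b where "b = max (F 0) (F 1)"
      have ab: "a < b" using ne by (auto simp: a_def b_def)
      have "{a..b} \<subseteq> F ` ?I"
      proof
        fix z assume z: "z \<in> {a..b}"
        show "z \<in> F ` ?I"
        proof (cases "F 0 \<le> F 1")
          case True
          then obtain s where "0 \<le> s" "s \<le> 1" "F s = z"
            using IVT'[of F 0 z 1] z contF by (auto simp: a_def b_def)
          then show ?thesis by auto
        next
          case False
          then obtain s where "0 \<le> s" "s \<le> 1" "(\<lambda>s. - F s) s = - z"
            using IVT'[of "\<lambda>s. - F s" 0 "-z" 1] z contF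
            by (auto simp: a_def b_def intro: continuous_intros)
          then show ?thesis by force
        qed
      qed
      then have "negligible (cbox a b)" using negI negligible_subset by (simp add: cbox_interval) blast
      then have "box a b = {}" by (simp only: negligible_interval)
      then show False using ab by (simp add: box_real)
    qed
    then show ?thesis using h(3,4) by (simp add: F_def)
  qed
  show ?thesis
  proof (cases "E = {}")
    case True then show ?thesis using assms(4) by blast
  next
    case False
    then obtain x0 where x0: "x0 \<in> E" by blast
    show ?thesis
    proof (intro exI conjI ballI)
      show "linear A" by (rule assms(4))
      fix x assume "x \<in> E"
      then show "f x = A x + (f x0 - A x0)" using key[OF x0 \<open>x \<in> E\<close>] by simp
    qed
  qed
qed
end
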